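(* Let $m\in\mathbb R$ be the unique minimizing point of $M$, let $s>2$, and suppose there is $x_0>0$ with $\mathbb E[|D^+h(X_1,m+x)|^s]<\infty$ for all $x\in[-x_0,x_0]$. Then $\hat m_n\to m$ $\mathbb P$-$r$-quickly for every $r\in(0,s/2)$, i.e. $\mathbb E[L_\epsilon^r]<\infty$ for all $\epsilon>0$, where $L_\epsilon:=\sup\{k\in\mathbb N:|\hat m_k-m|>\epsilon\}$ (with $L_\epsilon:=0$ if this set is empty and $L_\epsilon:=\infty$ if it is unbounded).
   Context: Let $(S,\mathcal S,Q)$ be a probability space and $h:S\times\mathbb R\to\mathbb R$ such that $h(\cdot,t)$ is $\mathcal S$-measurable for every $t\in\mathbb R$ and $h(x,\cdot)$ is convex for every $x\in S$. For $f:\mathbb R\to\mathbb R$ convex, $D^+f$ and $D^-f$ denote its right and left derivatives; $D^\pm h(x,t)$ denotes the one-sided derivatives of $h(x,\cdot)$ at $t$. Assume $\int_S|D^+h(x,t)|\,Q(dx)<\infty$ and $\int_S|D^-h(x,t)|\,Q(dx)<\infty$ for all $t\in\mathbb R$. Fix $t_0\in\mathbb R$ and set $M(t):=\int_S (h(x,t)-h(x,t_0))\,Q(dx)$; $M$ is real-valued and convex with $D^\pm M(t)=\int_S D^\pm h(x,t)\,Q(dx)$. Let $X_1,X_2,\dots$ be i.i.d. $S$-valued random variables on a probability space $(\Omega,\mathcal A,\mathbb P)$ with common law $Q$, let $M_n(t):=\frac1n\sum_{i=1}^n (h(X_i,t)-h(X_i,t_0))$, and let $\hat m_n$ be the smallest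 minimizing point of $M_n$ (assumed to exist; it is a random variable). *)

theory Defs
  imports "HOL-Probability.Probability"
begin

text \<open>Right and left derivatives of a real function (for convex functions these limits exist).\<close>
definition right_deriv :: "(real \<Rightarrow> real) \<Rightarrow> real \<Rightarrow> real" where
  "right_deriv f t = Lim (at_right t) (\<lambda>u. (f u - f t) / (u - t))"

definition left_deriv :: "(real \<Rightarrow> real) \<Rightarrow> real \<Rightarrow> real" where
  "left_deriv f t = Lim (at_left t) (\<lambda>u. (f u - f t) / (u - t))"

definition emp_crit :: "('a \<Rightarrow> real \<Rightarrow> real) \<Rightarrow> real \<Rightarrow> (nat \<Rightarrow> 'w \<Rightarrow> 'a) \<Rightarrow> nat \<Rightarrow> 'w \<Rightarrow> real \<Rightarrow> real" where
  "emp_crit h t0 X n \<omega> t = (1 / real n) * (\<Sum>i=1..n. h (X i \<omega>) t - h (X i \<omega>) t0)"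

definition last_exit :: "(nat \<Rightarrow> 'w \<Rightarrow> real) \<Rightarrow> real \<Rightarrow> real \<Rightarrow> 'w \<Rightarrow> enat" where
  "last_exit mhat m \<epsilon> \<omega> = Sup (enat ` {k. 1 \<le> k \<and> \<epsilon> < \<bar>mhat k \<omega> - m\<bar>})"

definition enat_powr :: "enat \<Rightarrow> real \<Rightarrow> ennreal" where
  "enat_powr L r = (case L of enat k \<Rightarrow> ennreal (real k powr r) | \<infinity> \<Rightarrow> \<infinity>)"

end

theory Submission
  imports Defs
begin


lemma convex_slope_mono:
  fixes f :: "real \<Rightarrow> real"
  assumes f: "convex_on UNIV f" and "a < u" "u \<le> v"
  shows "(f u - f a) / (u - a) \<le> (f v - f a) / (v - a)"
proof (cases "u = v")
  case False
  then have "u < v" using assms by simp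
  from convex_on_slope_le(1)[OF f _ _ \<open>a<u\<close> this]
  have "(f a - f u) / (a - u) \<le> (f a - f v) / (a - v)" by simp
  moreover have "(f a - f u) / (a - u) = (f u - f a) / (u - a)"
    by (metis minus_diff_eq minus_divide_divide)
  moreover have "(f a - f v) / (a - v) = (f v - f a) / (v - a)"
    by (metis minus_diff_eq minus_divide_divide)
  ultimately show ?thesis by simp
qed simp

lemma convex_slope_left:
  fixes f :: "real \<Rightarrow> real"
  assumes f: "convex_on UNIV f" and "c < a" "a < u"
  shows "(f a - f c) / (a - c) \<le> (f u - f a) / (u - a)"
proof -
  have 1: "(f c - f u) / (c - u) \<le> (f a - f u) / (a - u)"
    using convex_on_slope_le(2)[OF f _ _ assms(2,3)] by simp
  have 2: "(f c - f a) / (c - a) \<le> (f c - f u) / (c - u)"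
    using convex_on_slope_le(1)[OF f _ _ assms(2,3)] by simp
  have "(f a - f c) / (a - c) = (f c - f a) / (c - a)"
    by (metis minus_diff_eq minus_divide_divide)
  moreover have "(f u - f a) / (u - a) = (f a - f u) / (a - u)"
    by (metis minus_diff_eq minus_divide_divide)
  ultimately show ?thesis using 1 2 by linarith
qed

lemma right_deriv_convex:
  fixes f :: "real \<Rightarrow> real"
  assumes f: "convex_on UNIV f"
  shows "((\<lambda>u. (f u - f a) / (u - a)) \<longlongrightarrow> right_deriv f a) (at_right a)"
    and "\<And>u. a < u \<Longrightarrow> right_deriv f a \<le> (f u - f a) / (u - a)"
    and "\<And>c. c < a \<Longrightarrow> (f a - f c) / (a - c) \<le> right_deriv f a"
proof -
  define q where "q u = (f u - f a) / (u - a)" for u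
  define D where "D = Inf (q ` {a<..})"
  have bdd: "bdd_below (q ` {a<..})"
    unfolding bdd_below_def
    using convex_slope_left[OF f, of "a-1" a] by (auto simp: q_def)
  have Dle: "D \<le> q u" if "a < u" for u
    unfolding D_def using bdd that by (auto intro: cInf_lower)
  have lowD: "(f a - f c) / (a - c) \<le> D" if "c < a" for c
    unfolding D_def using convex_slope_left[OF f that] by (intro cInf_greatest) (auto simp: q_def)
  have lim: "(q \<longlongrightarrow> D) (at_right a)"
  proof (rule order_tendstoI)
    fix y assume "y < D"
    then show "eventually (\<lambda>u. y < q u) (at_right a)"
      using Dle unfolding eventually_at_right_field
      by (intro exI[of _ "a+1"]) (auto intro: less_le_trans)
  next
    fix y assume "D < y"
    then obtain u where u: "u \<in> {a<..}" "q u < y"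
      unfolding D_def using cInf_lessD[of "q ` {a<..}" y] by auto
    show "eventually (\<lambda>v. q v < y) (at_right a)"
      unfolding eventually_at_right_field
    proof (intro exI[of _ u] conjI allI impI)
      show "a < u" using u by simp
      fix v assume "a < v" "v < u"
      then have "q v \<le> q u" using convex_slope_mono[OF f, of a v u] by (simp add: q_def)
      then show "q v < y" using u by simp
    qed
  qed
  have qeq: "(\<lambda>u. (f u - f a) / (u - a)) = q" by (simp add: q_def fun_eq_iff)
  have RD: "right_deriv f a = D"
    unfolding right_deriv_def qeq using lim by (intro tendsto_Lim) auto
  show "((\<lambda>u. (f u - f a) / (u - a)) \<longlongrightarrow> right_deriv f a) (at_right a)"
    using lim RD qeq by simp
  show "\<And>u. a < u \<Longrightarrow> right_deriv f a \<le> (f u - f a) / (u - a)"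
    using Dle RD by (simp add: q_def)
  show "\<And>c. c < a \<Longrightarrow> (f a - f c) / (a - c) \<le> right_deriv f a"
    using lowD RD by simp
qed



lemma right_deriv_sum:
  fixes F :: "'i \<Rightarrow> real \<Rightarrow> real"
  assumes "finite I" "\<And>i. i \<in> I \<Longrightarrow> convex_on UNIV (F i)"
  shows "right_deriv (\<lambda>t. \<Sum>i\<in>I. F i t) a = (\<Sum>i\<in>I. right_deriv (F i) a)"
proof -
  have "((\<lambda>u. \<Sum>i\<in>I. (F i u - F i a) / (u - a)) \<longlongrightarrow> (\<Sum>i\<in>I. right_deriv (F i) a)) (at_right a)"
    using assms by (intro tendsto_sum right_deriv_convex(1)) auto
  moreover have "(\<lambda>u. ((\<Sum>i\<in>I. F i u) - (\<Sum>i\<in>I. F i a)) / (u - a)) = (\<lambda>u. \<Sum>i\<in>I. (F i u - F i a) / (u - a))"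
    by (simp add: fun_eq_iff sum_divide_distrib[symmetric] sum_subtractf)
  ultimately show ?thesis
    unfolding right_deriv_def by (intro tendsto_Lim) auto
qed

lemma convex_on_sum_fun:
  fixes F :: "'i \<Rightarrow> real \<Rightarrow> real"
  assumes "finite I" "\<And>i. i \<in> I \<Longrightarrow> convex_on UNIV (F i)"
  shows "convex_on UNIV (\<lambda>t. \<Sum>i\<in>I. F i t)"
  using assms
proof (induction I rule: finite_induct)
  case empty
  then show ?case by (simp add: convex_on_const)
next
  case (insert x F)
  then show ?case by (auto intro: convex_on_add)
qed

lemma emp_crit_eq:
  "emp_crit h t0 X n \<omega> t = (1 / real n) * ((\<Sum>i=1..n. h (X i \<omega>) t) - (\<Sum>i=1..n. h (X i \<omega>) t0))"
  unfolding emp_crit_def by (simp add: sum_subtractf)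

lemma mhat_above:
  assumes n: "n \<ge> 1"
    and cvx: "\<And>i. i \<in> {1..n} \<Longrightarrow> convex_on UNIV (h (X i \<omega>))"
    and mn: "\<And>t. emp_crit h t0 X n \<omega> mh \<le> emp_crit h t0 X n \<omega> t"
    and sm: "\<And>t. (\<forall>u. emp_crit h t0 X n \<omega> t \<le> emp_crit h t0 X n \<omega> u) \<Longrightarrow> mh \<le> t"
    and gt: "a < mh"
  shows "(\<Sum>i=1..n. right_deriv (h (X i \<omega>)) a) < 0"
proof (rule ccontr)
  assume neg: "\<not> ?thesis"
  define G where "G t = (\<Sum>i=1..n. h (X i \<omega>) t)" for t
  have cG: "convex_on UNIV G" unfolding G_def[abs_def] using cvx by (intro convex_on_sum_fun) auto
  have "right_deriv G a = (\<Sum>i=1..n. right_deriv (h (X i \<omega>)) a)"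
    unfolding G_def[abs_def] using cvx by (intro right_deriv_sum) auto
  then have "0 \<le> right_deriv G a" using neg by simp
  also have "\<dots> \<le> (G mh - G a) / (mh - a)" using right_deriv_convex(2)[OF cG gt] .
  finally have "G a \<le> G mh" using gt by (simp add: zero_le_divide_iff)
  then have "emp_crit h t0 X n \<omega> a \<le> emp_crit h t0 X n \<omega> mh"
    unfolding emp_crit_eq G_def[symmetric] using n by (intro mult_left_mono) auto
  then have "mh \<le> a" using mn by (intro sm) (meson order_trans)
  then show False using gt by simp
qed

lemma mhat_below:
  assumes n: "n \<ge> 1"
    and cvx: "\<And>i. i \<in> {1..n} \<Longrightarrow> convex_on UNIV (h (X i \<omega>))"
    and mn: "\<And>t. emp_crit h t0 X n \<omega> mh \<le> emp_crit h t0 X n \<omega> t"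
    and lt: "mh < b"
  shows "0 \<le> (\<Sum>i=1..n. right_deriv (h (X i \<omega>)) b)"
proof -
  define G where "G t = (\<Sum>i=1..n. h (X i \<omega>) t)" for t
  have cG: "convex_on UNIV G" unfolding G_def[abs_def] using cvx by (intro convex_on_sum_fun) auto
  have rd: "right_deriv G b = (\<Sum>i=1..n. right_deriv (h (X i \<omega>)) b)"
    unfolding G_def[abs_def] using cvx by (intro right_deriv_sum) auto
  have "(1 / real n) * (G mh - G t0) \<le> (1 / real n) * (G b - G t0)"
    using mn[of b] unfolding emp_crit_eq G_def[symmetric] .
  then have "G mh \<le> G b" using n by (simp add: divide_le_cancel)
  then have "0 \<le> (G b - G mh) / (b - mh)" using lt by simp
  also have "\<dots> \<le> right_deriv G b" using right_deriv_convex(3)[OF cG lt] .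
  finally show ?thesis using rd by simp
qed



lemma exp_quad_bound:
  fixes x c :: real
  assumes "x \<le> c" "0 \<le> c"
  shows "exp x \<le> 1 + x + x^2 * exp c"
proof (cases "x < 0")
  case True
  obtain t where t: "0 < \<bar>t\<bar>" "\<bar>t\<bar> < \<bar>x\<bar>"
    "exp x = (\<Sum>m<3. x ^ m / fact m) + exp t / fact 3 * x ^ 3"
    using Maclaurin_exp_lt[of x 3] True by auto
  have s: "(\<Sum>m<3. x ^ m / fact m) = 1 + x + x^2 / 2"
    by (simp add: numeral_3_eq_3 eval_nat_numeral)
  have "exp t / fact 3 * x ^ 3 \<le> 0"
    using True by (intro mult_nonneg_nonpos) (auto simp: power_odd_eq)
  then have "exp x \<le> 1 + x + x^2 / 2" using t(3) s by simp
  also have "x^2 / 2 \<le> x^2 * exp c"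
  proof -
    have "1 \<le> exp c" using assms by simp
    then have "x^2 * 1 \<le> x^2 * exp c" by (intro mult_left_mono) auto
    then show ?thesis using zero_le_power2[of x] by linarith
  qed
  finally show ?thesis by simp
next
  case False
  obtain t where t: "\<bar>t\<bar> \<le> \<bar>x\<bar>" "exp x = (\<Sum>m<2. x ^ m / fact m) + exp t / fact 2 * x ^ 2"
    using Maclaurin_exp_le[of x 2] by auto
  have "exp t \<le> exp c" using t(1) False assms by simp
  then have "exp t / 2 \<le> exp c" using exp_gt_zero[of t] by linarith
  then have "exp t / 2 * x^2 \<le> exp c * x^2"
    by (intro mult_right_mono) auto
  then show ?thesis using t(2) by (simp add: eval_nat_numeral mult.commute)
qed

lemma ln_le_4_root4:
  assumes "(0::real) < k"
  shows "ln k \<le> 4 * k powr (1/4)"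
proof -
  have "ln (k powr (1/4)) \<le> k powr (1/4) - 1"
    using assms by (intro ln_le_minus_one) auto
  then have "ln k / 4 \<le> k powr (1/4)" using assms by (simp add: ln_powr)
  then show ?thesis by simp
qed

lemma factor_bound:
  fixes g :: "'a \<Rightarrow> real"
  assumes Q: "prob_space Q" and gm: "g \<in> borel_measurable Q"
    and gi: "integrable Q g" and g2: "integrable Q (\<lambda>x. (g x)^2)"
    and l: "0 \<le> l" and T: "0 \<le> T"
  shows "(\<integral>\<^sup>+x. ennreal (exp (- l * max (g x) (- T))) \<partial>Q)
     \<le> ennreal (exp (- l * (\<integral>x. g x \<partial>Q) + l^2 * (\<integral>x. (g x)^2 \<partial>Q) * exp (l * T)))"
proof -
  interpret Q: prob_space Q by fact
  define y where "y x = max (g x) (- T)" for x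
  have ym[measurable]: "y \<in> borel_measurable Q" unfolding y_def[abs_def] using gm by measurable
  have yi: "integrable Q y" unfolding y_def[abs_def] using gi by (intro integrable_max) auto
  have y2le: "(y x)^2 \<le> (g x)^2" for x
    unfolding y_def using T by (cases "g x \<ge> - T") (auto simp: max_def abs_le_square_iff[symmetric])
  have y2i: "integrable Q (\<lambda>x. (y x)^2)"
  proof (rule Bochner_Integration.integrable_bound[OF g2])
    show "(\<lambda>x. (y x)^2) \<in> borel_measurable Q" by measurable
    show "AE x in Q. norm ((y x)^2) \<le> norm ((g x)^2)"
      using y2le by (intro AE_I2) simp
  qed
  have eb: "exp (- l * y x) \<le> exp (l * T)" for x
  proof -
    have "- T \<le> y x" unfolding y_def by simp
    then have "l * (- T) \<le> l * y x" using l by (rule mult_left_mono)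
    then show ?thesis by simp
  qed
  have ei: "integrable Q (\<lambda>x. exp (- l * y x))"
  proof (rule Bochner_Integration.integrable_bound[OF Q.integrable_const[of "exp (l * T)"]])
    show "(\<lambda>x. exp (- l * y x)) \<in> borel_measurable Q" by measurable
    show "AE x in Q. norm (exp (- l * y x)) \<le> norm (exp (l * T))"
      using eb by (intro AE_I2) simp
  qed
  have "(\<integral>\<^sup>+x. ennreal (exp (- l * max (g x) (- T))) \<partial>Q) = ennreal (\<integral>x. exp (- l * y x) \<partial>Q)"
    unfolding y_def[symmetric] using ei by (intro nn_integral_eq_integral) auto
  also have "(\<integral>x. exp (- l * y x) \<partial>Q) \<le> (\<integral>x. 1 + (- l * y x) + (- l * y x)^2 * exp (l * T) \<partial>Q)"
    using ei yi y2i
  proof (intro integral_mono)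
    fix x show "exp (- l * y x) \<le> 1 + (- l * y x) + (- l * y x)^2 * exp (l * T)"
    proof (rule exp_quad_bound)
      have "- T \<le> y x" unfolding y_def by simp
      then have "l * (- T) \<le> l * y x" using l by (rule mult_left_mono)
      then show "- l * y x \<le> l * T" by simp
    qed (use l T in auto)
  qed (auto simp: power_mult_distrib)
  also have "(\<integral>x. 1 + (- l * y x) + (- l * y x)^2 * exp (l * T) \<partial>Q)
      = (\<integral>x. 1 + ((- l) * y x + (l^2 * exp (l * T)) * (y x)^2) \<partial>Q)"
    by (intro Bochner_Integration.integral_cong) (auto simp: power_mult_distrib algebra_simps)
  also have "\<dots> = 1 + ((- l) * (\<integral>x. y x \<partial>Q) + (l^2 * exp (l * T)) * (\<integral>x. (y x)^2 \<partial>Q))"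
    using yi y2i by (simp add: Q.prob_space)
  also have "\<dots> \<le> 1 + ((- l) * (\<integral>x. g x \<partial>Q) + (l^2 * exp (l * T)) * (\<integral>x. (g x)^2 \<partial>Q))"
  proof -
    have "(\<integral>x. g x \<partial>Q) \<le> (\<integral>x. y x \<partial>Q)" using gi yi by (intro integral_mono) (auto simp: y_def)
    then have 1: "l * (\<integral>x. g x \<partial>Q) \<le> l * (\<integral>x. y x \<partial>Q)" using l by (rule mult_left_mono)
    have "(\<integral>x. (y x)^2 \<partial>Q) \<le> (\<integral>x. (g x)^2 \<partial>Q)" using g2 y2i y2le by (intro integral_mono) auto
    then have 2: "(l^2 * exp (l * T)) * (\<integral>x. (y x)^2 \<partial>Q) \<le> (l^2 * exp (l * T)) * (\<integral>x. (g x)^2 \<partial>Q)"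
      by (rule mult_left_mono) auto
    from 1 2 show ?thesis by linarith
  qed
  also have "\<dots> \<le> exp (- l * (\<integral>x. g x \<partial>Q) + l^2 * (\<integral>x. (g x)^2 \<partial>Q) * exp (l * T))"
    using exp_ge_add_one_self[of "- l * (\<integral>x. g x \<partial>Q) + l^2 * (\<integral>x. (g x)^2 \<partial>Q) * exp (l * T)"]
    by (simp add: algebra_simps)
  finally show ?thesis by (simp add: ennreal_leI)
qed



lemma chernoff_trunc:
  fixes g :: "'a \<Rightarrow> real" and X :: "nat \<Rightarrow> 'w \<Rightarrow> 'a"
  assumes P: "prob_space P" and Q: "prob_space Q"
    and Xm: "\<And>i. i \<ge> 1 \<Longrightarrow> X i \<in> measurable P Q"
    and ind: "prob_space.indep_vars P (\<lambda>_. Q) X {1..}"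
    and law: "\<And>i. i \<ge> 1 \<Longrightarrow> distr P Q (X i) = Q"
    and gm: "g \<in> borel_measurable Q" and gi: "integrable Q g" and g2: "integrable Q (\<lambda>x. (g x)^2)"
    and l: "0 \<le> l" and T: "\<And>i. 0 \<le> T i" and I: "finite I" "I \<subseteq> {1..}"
  shows "emeasure P {\<omega> \<in> space P. (\<Sum>i\<in>I. max (g (X i \<omega>)) (- T i)) \<le> 0}
     \<le> ennreal (\<Prod>i\<in>I. exp (- l * (\<integral>x. g x \<partial>Q) + l^2 * (\<integral>x. (g x)^2 \<partial>Q) * exp (l * T i)))"
proof -
  interpret P: prob_space P by fact
  define F where "F \<omega> = (\<Sum>i\<in>I. max (g (X i \<omega>)) (- T i))" for \<omega>
  define A where "A = {\<omega> \<in> space P. F \<omega> \<le> 0}"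
  have gX: "(\<lambda>\<omega>. g (X i \<omega>)) \<in> borel_measurable P" if "i \<in> I" for i
    using that I by (intro measurable_compose[OF Xm gm]) auto
  have Fm: "F \<in> borel_measurable P"
    unfolding F_def[abs_def] using gX by (intro borel_measurable_sum borel_measurable_max) auto
  have A: "A \<in> sets P" unfolding A_def using Fm by measurable
  define Y where "Y i \<omega> = ennreal (exp (- l * max (g (X i \<omega>)) (- T i)))" for i \<omega>
  have "emeasure P A = (\<integral>\<^sup>+\<omega>. indicator A \<omega> \<partial>P)" using A by simp
  also have "\<dots> \<le> (\<integral>\<^sup>+\<omega>. (\<Prod>i\<in>I. Y i \<omega>) \<partial>P)"
  proof (intro nn_integral_mono)
    fix \<omega> assume "\<omega> \<in> space P"
    have "(\<Prod>i\<in>I. Y i \<omega>) = ennreal (\<Prod>i\<in>I. exp (- l * max (g (X i \<omega>)) (- T i)))"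
      unfolding Y_def by (rule prod_ennreal) simp
    also have "(\<Prod>i\<in>I. exp (- l * max (g (X i \<omega>)) (- T i))) = exp (- l * F \<omega>)"
      unfolding F_def using I by (simp add: exp_sum sum_distrib_left)
    finally have pe: "(\<Prod>i\<in>I. Y i \<omega>) = ennreal (exp (- l * F \<omega>))" .
    show "indicator A \<omega> \<le> (\<Prod>i\<in>I. Y i \<omega>)"
    proof (cases "\<omega> \<in> A")
      case True
      then have "0 \<le> - l * F \<omega>" using l unfolding A_def by (simp add: mult_nonneg_nonpos)
      then have "1 \<le> exp (- l * F \<omega>)" by simp
      then show ?thesis using True pe by (simp add: ennreal_leI)
    qed simp
  qed
  also have "\<dots> = (\<Prod>i\<in>I. \<integral>\<^sup>+\<omega>. Y i \<omega> \<partial>P)"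
  proof (rule P.indep_vars_nn_integral)
    show "finite I" by fact
    have ind2: "P.indep_vars (\<lambda>_. Q) X I" using P.indep_vars_subset[OF ind I(2)] .
    have "P.indep_vars (\<lambda>_. borel) (\<lambda>i \<omega>. (\<lambda>i x. ennreal (exp (- l * max (g x) (- T i)))) i (X i \<omega>)) I"
      by (rule P.indep_vars_compose2[OF ind2]) (use gm in measurable)
    then show "P.indep_vars (\<lambda>_. borel) Y I" unfolding Y_def[abs_def] by simp
  qed simp
  also have "\<dots> \<le> (\<Prod>i\<in>I. ennreal (exp (- l * (\<integral>x. g x \<partial>Q) + l^2 * (\<integral>x. (g x)^2 \<partial>Q) * exp (l * T i))))"
  proof (rule prod_mono_ennreal)
    fix i assume i: "i \<in> I"
    then have i1: "i \<ge> 1" using I by auto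
    have "(\<integral>\<^sup>+\<omega>. Y i \<omega> \<partial>P) = (\<integral>\<^sup>+x. ennreal (exp (- l * max (g x) (- T i))) \<partial>distr P Q (X i))"
      unfolding Y_def using Xm[OF i1] gm by (subst nn_integral_distr) auto
    also have "\<dots> = (\<integral>\<^sup>+x. ennreal (exp (- l * max (g x) (- T i))) \<partial>Q)" using law[OF i1] by simp
    also have "\<dots> \<le> ennreal (exp (- l * (\<integral>x. g x \<partial>Q) + l^2 * (\<integral>x. (g x)^2 \<partial>Q) * exp (l * T i)))"
      by (rule factor_bound[OF Q gm gi g2 l T])
    finally show "(\<integral>\<^sup>+\<omega>. Y i \<omega> \<partial>P) \<le> \<dots>" .
  qed
  also have "\<dots> = ennreal (\<Prod>i\<in>I. exp (- l * (\<integral>x. g x \<partial>Q) + l^2 * (\<integral>x. (g x)^2 \<partial>Q) * exp (l * T i)))"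
    by (rule prod_ennreal) simp
  finally show ?thesis unfolding A_def F_def .
qed



lemma powr_split_bound:
  fixes N s :: real
  assumes "0 \<le> N" "0 \<le> s"
  shows "(N + 1) powr s \<le> 2 powr s * (1 + N powr s)"
proof (cases "N \<le> 1")
  case True
  have "(N + 1) powr s \<le> 2 powr s" using assms True by (intro powr_mono2) auto
  also have "\<dots> \<le> 2 powr s * (1 + N powr s)" by simp
  finally show ?thesis .
next
  case False
  have "(N + 1) powr s \<le> (2 * N) powr s" using assms False by (intro powr_mono2) auto
  also have "\<dots> = 2 powr s * N powr s" using assms by (simp add: powr_mult)
  also have "\<dots> \<le> 2 powr s * (1 + N powr s)" by simp
  finally show ?thesis .
qed

lemma count_bound:
  fixes f :: "nat \<Rightarrow> nat \<Rightarrow> ennreal" and N R s :: real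
  assumes N: "0 \<le> N" and R: "1 \<le> R" "R + 1 \<le> s"
    and f: "\<And>n j. f n j \<le> (if real n < N \<and> real j < N then ennreal (N powr (R - 1)) else 0)"
  shows "(\<Sum>n. \<Sum>j. f n j) \<le> ennreal (2 powr s * (1 + N powr s))"
proof -
  define M where "M = nat \<lceil>N\<rceil>"
  define a where "a = N powr (R - 1)"
  have Miff: "real n < N \<longleftrightarrow> n < M" for n
    unfolding M_def by (metis less_ceiling_iff of_int_of_nat_eq zless_nat_eq_int_zless)
  have fb: "f n j \<le> (if n < M \<and> j < M then ennreal a else 0)" for n j
    using f[of n j] unfolding Miff a_def .
  have "(\<Sum>n. \<Sum>j. f n j) \<le> (\<Sum>n. \<Sum>j. (if n < M \<and> j < M then ennreal a else 0))"
    by (intro suminf_le summableI fb)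
  also have "(\<lambda>n. \<Sum>j. (if n < M \<and> j < M then ennreal a else 0)) = (\<lambda>n. if n < M then of_nat M * ennreal a else 0)"
  proof
    fix n
    have "(\<Sum>j. (if n < M \<and> j < M then ennreal a else 0)) = (\<Sum>j<M. (if n < M \<and> j < M then ennreal a else 0))"
      by (rule suminf_finite) auto
    then show "(\<Sum>j. (if n < M \<and> j < M then ennreal a else 0)) = (if n < M then of_nat M * ennreal a else 0)"
      by simp
  qed
  also have "(\<Sum>n. if n < M then of_nat M * ennreal a else 0) = (\<Sum>n<M. if n < M then of_nat M * ennreal a else 0)"
    by (rule suminf_finite) auto
  also have "\<dots> = of_nat M * (of_nat M * ennreal a)" by simp
  also have "\<dots> = ennreal (real M * real M * a)"
    unfolding a_def using N by (simp add: ennreal_mult ennreal_of_nat_eq_real_of_nat mult.assoc)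
  also have "real M * real M * a \<le> (N + 1) * (N + 1) * (N + 1) powr (R - 1)"
  proof -
    have M1: "real M \<le> N + 1" unfolding M_def using N by linarith
    have "a \<le> (N + 1) powr (R - 1)" unfolding a_def using N R by (intro powr_mono2) auto
    then show ?thesis using M1 N by (intro mult_mono) (auto simp: a_def)
  qed
  also have "\<dots> = (N + 1) powr (R + 1)"
  proof -
    have p: "N + 1 > 0" using N by simp
    have "(N + 1) powr (R + 1) = (N + 1) powr (1 + 1 + (R - 1))" by (simp add: add.commute)
    also have "\<dots> = (N + 1) powr 1 * (N + 1) powr 1 * (N + 1) powr (R - 1)" by (simp only: powr_add)
    finally show ?thesis using p by simp
  qed
  also have "\<dots> \<le> (N + 1) powr s" using N R by (intro powr_mono) auto
  also have "\<dots> \<le> 2 powr s * (1 + N powr s)" using N R by (intro powr_split_bound) auto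
  finally show ?thesis by (simp add: ennreal_leI)
qed



lemma E_part:
  fixes g :: "'a \<Rightarrow> real"
  assumes Q: "prob_space Q" and gm[measurable]: "g \<in> borel_measurable Q"
    and mom: "(\<integral>\<^sup>+x. ennreal (\<bar>g x\<bar> powr s) \<partial>Q) < \<infinity>" and \<delta>: "0 < \<delta>"
    and R: "1 \<le> R" "R + 1 \<le> s"
  shows "(\<Sum>n. ennreal (real n powr (R-1)) * (\<Sum>j. emeasure Q {x\<in>space Q. g x < -(\<delta> * real (max (Suc j) n))})) < \<infinity>"
proof -
  interpret Q: prob_space Q by fact
  define E where "E n j = {x\<in>space Q. g x < -(\<delta> * real (max (Suc j) n))}" for n j
  have Em[measurable]: "E n j \<in> sets Q" for n j unfolding E_def by measurable
  define w where "w n = real n powr (R - 1)" for n :: nat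
  have "(\<Sum>n. ennreal (w n) * (\<Sum>j. emeasure Q (E n j))) = (\<Sum>n. \<Sum>j. \<integral>\<^sup>+x. ennreal (w n) * indicator (E n j) x \<partial>Q)"
    by (simp add: nn_integral_cmult_indicator[OF Em])
  also have "\<dots> = (\<Sum>n. \<integral>\<^sup>+x. (\<Sum>j. ennreal (w n) * indicator (E n j) x) \<partial>Q)"
    by (subst nn_integral_suminf) auto
  also have "\<dots> = (\<integral>\<^sup>+x. (\<Sum>n. \<Sum>j. ennreal (w n) * indicator (E n j) x) \<partial>Q)"
    by (subst nn_integral_suminf) auto
  also have "\<dots> \<le> (\<integral>\<^sup>+x. ennreal (2 powr s * (1 + (\<bar>g x\<bar> / \<delta>) powr s)) \<partial>Q)"
  proof (intro nn_integral_mono count_bound)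
    fix x n j
    let ?N = "\<bar>g x\<bar> / \<delta>"
    show "0 \<le> ?N" using \<delta> by simp
    show "ennreal (w n) * indicator (E n j) x \<le> (if real n < ?N \<and> real j < ?N then ennreal (?N powr (R - 1)) else 0)"
    proof (cases "x \<in> E n j")
      case True
      then have "\<delta> * real (max (Suc j) n) < \<bar>g x\<bar>" unfolding E_def by auto
      then have mx: "real (max (Suc j) n) < ?N" using \<delta> by (simp add: field_simps)
      then have nN: "real n < ?N" and jN: "real j < ?N" by auto
      have "w n \<le> ?N powr (R - 1)" unfolding w_def using nN R by (intro powr_mono2) auto
      then show ?thesis using True nN jN by (simp add: ennreal_leI)
    qed simp
  qed (use R in auto)
  also have "\<dots> = (\<integral>\<^sup>+x. ennreal (2 powr s) * (1 + ennreal (1 / \<delta> powr s) * ennreal (\<bar>g x\<bar> powr s)) \<partial>Q)"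
  proof (intro nn_integral_cong)
    fix x
    have "(\<bar>g x\<bar> / \<delta>) powr s = (1 / \<delta> powr s) * \<bar>g x\<bar> powr s" using \<delta> by (simp add: powr_divide)
    moreover have "ennreal (2 powr s * (1 + (1 / \<delta> powr s) * \<bar>g x\<bar> powr s)) = ennreal (2 powr s) * (1 + ennreal (1 / \<delta> powr s) * ennreal (\<bar>g x\<bar> powr s))"
    proof -
      let ?c = "1 / \<delta> powr s" and ?d = "\<bar>g x\<bar> powr s"
      have c: "0 \<le> ?c" "0 \<le> ?d" by auto
      have "ennreal (2 powr s * (1 + ?c * ?d)) = ennreal (2 powr s) * ennreal (1 + ?c * ?d)"
        by (rule ennreal_mult) (use c in auto)
      also have "ennreal (1 + ?c * ?d) = ennreal 1 + ennreal (?c * ?d)"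
        by (rule ennreal_plus) (use c in auto)
      also have "ennreal (?c * ?d) = ennreal ?c * ennreal ?d"
        by (rule ennreal_mult) (use c in auto)
      finally show ?thesis by simp
    qed
    ultimately show "ennreal (2 powr s * (1 + (\<bar>g x\<bar> / \<delta>) powr s)) = ennreal (2 powr s) * (1 + ennreal (1 / \<delta> powr s) * ennreal (\<bar>g x\<bar> powr s))"
      by simp
  qed
  also have "\<dots> = ennreal (2 powr s) * (1 + ennreal (1 / \<delta> powr s) * (\<integral>\<^sup>+x. ennreal (\<bar>g x\<bar> powr s) \<partial>Q))"
    by (simp add: nn_integral_cmult nn_integral_add Q.emeasure_space_1)
  also have "\<dots> < \<infinity>" using mom by (simp add: ennreal_mult_less_top less_top)
  finally show ?thesis unfolding E_def w_def .
qed



lemma key_real: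
  fixes k n :: nat and \<mu> \<sigma> R :: real
  assumes k: "1 \<le> k" and nk: "n \<le> k" and \<mu>: "0 < \<mu>" and \<sigma>: "0 \<le> \<sigma>" and R: "0 \<le> R"
  defines "c \<equiv> (R + 3) / \<mu>" and "\<delta> \<equiv> \<mu> / (2 * (R + 3))"
  defines "l \<equiv> c * ln (real k) / real k"
  shows "(\<Prod>i\<in>{1..k}. exp (- l * \<mu> + l^2 * \<sigma> * exp (l * (\<delta> * real (max i n)))))
           \<le> exp (16 * c^2 * \<sigma>) * real k powr (-(R + 3))"
proof -
  define L where "L = ln (real k)"
  have kpos: "0 < real k" using k by simp
  have L0: "0 \<le> L" unfolding L_def using k by simp
  have c0: "0 < c" unfolding c_def using \<mu> R by simp
  have l0: "0 \<le> l" unfolding l_def using c0 L0 kpos by (simp add: L_def)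
  have R3: "R + 3 \<noteq> 0" using R by simp
  have cd: "c * \<delta> = 1 / 2" unfolding c_def \<delta>_def using \<mu> R3 by simp
  have lk: "l * (\<delta> * real k) = L / 2"
    unfolding l_def L_def using kpos cd by (simp add: field_simps)
  define b where "b = - l * \<mu> + l^2 * \<sigma> * exp (L / 2)"
  have fac: "exp (- l * \<mu> + l^2 * \<sigma> * exp (l * (\<delta> * real (max i n)))) \<le> exp b" if "i \<in> {1..k}" for i
  proof -
    have "\<delta> * real (max i n) \<le> \<delta> * real k"
      using that nk \<mu> R by (intro mult_left_mono) (auto simp: \<delta>_def)
    then have "l * (\<delta> * real (max i n)) \<le> L / 2" using lk l0 by (metis mult_left_mono)
    then have "exp (l * (\<delta> * real (max i n))) \<le> exp (L / 2)" by simp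
    then have "l^2 * \<sigma> * exp (l * (\<delta> * real (max i n))) \<le> l^2 * \<sigma> * exp (L / 2)"
      using \<sigma> by (intro mult_left_mono) auto
    then show ?thesis unfolding b_def by simp
  qed
  have "(\<Prod>i\<in>{1..k}. exp (- l * \<mu> + l^2 * \<sigma> * exp (l * (\<delta> * real (max i n))))) \<le> (\<Prod>i\<in>{1..k}. exp b)"
    using fac by (intro prod_mono) auto
  also have "\<dots> = exp (real k * b)" by (simp add: exp_of_nat_mult)
  also have "real k * b = - (R + 3) * L + c^2 * \<sigma> * (L^2 * exp (L / 2) / real k)"
    unfolding b_def l_def L_def[symmetric] using kpos \<mu>
    by (simp add: c_def field_simps power2_eq_square)
  also have "\<dots> \<le> - (R + 3) * L + c^2 * \<sigma> * 16"
  proof -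
    have e: "exp (L / 2) = real k powr (1/2)" unfolding L_def using kpos by (simp add: powr_def)
    have "L \<le> 4 * real k powr (1/4)" unfolding L_def using kpos by (rule ln_le_4_root4)
    then have "L^2 \<le> (4 * real k powr (1/4))^2" using L0 by (intro power_mono) auto
    also have "\<dots> = 16 * real k powr (1/2)"
      using kpos by (simp add: power2_eq_square powr_add[symmetric])
    finally have L2: "L^2 \<le> 16 * real k powr (1/2)" .
    have "L^2 * exp (L / 2) \<le> 16 * real k powr (1/2) * real k powr (1/2)"
      unfolding e by (rule mult_right_mono[OF L2]) simp
    also have "\<dots> = 16 * real k" using kpos by (simp add: powr_add[symmetric])
    finally have "L^2 * exp (L / 2) / real k \<le> 16" using kpos by (simp add: divide_le_eq)
    then show ?thesis using \<sigma> by (intro add_left_mono mult_left_mono) auto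
  qed
  finally have "(\<Prod>i\<in>{1..k}. exp (- l * \<mu> + l^2 * \<sigma> * exp (l * (\<delta> * real (max i n)))))
      \<le> exp (- (R + 3) * L + c^2 * \<sigma> * 16)" by simp
  also have "\<dots> = exp (16 * c^2 * \<sigma>) * real k powr (-(R + 3))"
    unfolding L_def using kpos by (simp add: powr_def exp_add[symmetric] mult.commute)
  finally show ?thesis .
qed



lemma F_part:
  fixes g :: "'a \<Rightarrow> real" and X :: "nat \<Rightarrow> 'w \<Rightarrow> 'a"
  assumes P: "prob_space P" and Q: "prob_space Q"
    and Xm: "\<And>i. i \<ge> 1 \<Longrightarrow> X i \<in> measurable P Q"
    and ind: "prob_space.indep_vars P (\<lambda>_. Q) X {1..}"
    and law: "\<And>i. i \<ge> 1 \<Longrightarrow> distr P Q (X i) = Q"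
    and gm: "g \<in> borel_measurable Q" and gi: "integrable Q g" and g2: "integrable Q (\<lambda>x. (g x)^2)"
    and \<mu>: "0 < (\<integral>x. g x \<partial>Q)" and R: "1 \<le> R"
  shows "(\<Sum>n. ennreal (real n powr (R-1)) * (\<Sum>k. emeasure P {\<omega>\<in>space P. n \<le> k \<and>
            (\<Sum>i=1..k. max (g (X i \<omega>)) (-((\<integral>x. g x \<partial>Q) / (2 * (R + 3)) * real (max i n)))) \<le> 0})) < \<infinity>"
proof -
  define \<mu>' where "\<mu>' = (\<integral>x. g x \<partial>Q)"
  define \<sigma> where "\<sigma> = (\<integral>x. (g x)^2 \<partial>Q)"
  define c where "c = (R + 3) / \<mu>'"
  define \<delta> where "\<delta> = \<mu>' / (2 * (R + 3))"
  define K where "K = exp (16 * c^2 * \<sigma>)"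
  define F where "F n k = {\<omega>\<in>space P. n \<le> k \<and> (\<Sum>i=1..k. max (g (X i \<omega>)) (-(\<delta> * real (max i n)))) \<le> 0}" for n k :: nat
  have \<mu>0: "0 < \<mu>'" using \<mu> by (simp add: \<mu>'_def)
  have \<sigma>0: "0 \<le> \<sigma>" unfolding \<sigma>_def by (rule integral_nonneg_AE) auto
  have \<delta>0: "0 \<le> \<delta>" unfolding \<delta>_def using \<mu>0 R by simp
  have K0: "0 \<le> K" unfolding K_def by simp
  have Fb: "emeasure P (F n k) \<le> ennreal (K * real n powr (-(R+1)) * real k powr (-2))" if n: "1 \<le> n" for n k
  proof (cases "n \<le> k")
    case False
    then have "F n k = {}" unfolding F_def by auto
    then show ?thesis by simp
  next
    case True
    then have k: "1 \<le> k" using n by simp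
    define l where "l = c * ln (real k) / real k"
    have l0: "0 \<le> l" unfolding l_def c_def using \<mu>0 R k by simp
    have "F n k = {\<omega>\<in>space P. (\<Sum>i\<in>{1..k}. max (g (X i \<omega>)) (- (\<delta> * real (max i n)))) \<le> 0}"
      unfolding F_def using True by simp
    also have "emeasure P \<dots> \<le> ennreal (\<Prod>i\<in>{1..k}. exp (- l * \<mu>' + l^2 * \<sigma> * exp (l * (\<delta> * real (max i n)))))"
      unfolding \<mu>'_def \<sigma>_def
      by (rule chernoff_trunc[OF P Q Xm ind law gm gi g2 l0]) (use \<delta>0 in auto)
    also have "\<dots> \<le> ennreal (K * real k powr (-(R + 3)))"
      unfolding K_def l_def c_def \<delta>_def
      by (rule ennreal_leI, rule key_real) (use k True \<mu>0 \<sigma>0 R in auto)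
    also have "K * real k powr (-(R + 3)) \<le> K * real n powr (-(R+1)) * real k powr (-2)"
    proof -
      have "real k powr (-(R + 3)) = real k powr (-(R+1) + (-2))"
        by (rule arg_cong[where f="\<lambda>x. real k powr x"]) simp
      also have "\<dots> = real k powr (-(R+1)) * real k powr (-2)"
        by (rule powr_add)
      also have "\<dots> \<le> real n powr (-(R+1)) * real k powr (-2)"
        using True n R by (intro mult_right_mono powr_mono2') auto
      finally show ?thesis using K0 by (simp add: mult.assoc mult_left_mono)
    qed
    finally show ?thesis by (simp add: ennreal_leI)
  qed
  define Z where "Z = (\<Sum>k. real k powr (-2))"
  have sumZ: "summable (\<lambda>k. real k powr (-2::real))" by (subst summable_real_powr_iff) simp
  have Z0: "0 \<le> Z" unfolding Z_def by (intro suminf_nonneg sumZ) simp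
  have Fs: "(\<Sum>k. emeasure P (F n k)) \<le> ennreal (K * real n powr (-(R+1)) * Z)" if n: "1 \<le> n" for n
  proof -
    have "(\<Sum>k. emeasure P (F n k)) \<le> (\<Sum>k. ennreal (K * real n powr (-(R+1)) * real k powr (-2)))"
      by (intro suminf_le Fb n) auto
    also have "\<dots> = ennreal (\<Sum>k. K * real n powr (-(R+1)) * real k powr (-2))"
      using K0 by (intro suminf_ennreal2 summable_mult sumZ) auto
    also have "(\<Sum>k. K * real n powr (-(R+1)) * real k powr (-2)) = K * real n powr (-(R+1)) * Z"
      unfolding Z_def by (rule suminf_mult[OF sumZ])
    finally show ?thesis .
  qed
  have tm: "ennreal (real n powr (R-1)) * (\<Sum>k. emeasure P (F n k)) \<le> ennreal (K * Z * real n powr (-2))" for n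
  proof (cases "n = 0")
    case True then show ?thesis by simp
  next
    case False
    then have n: "1 \<le> n" by simp
    have "ennreal (real n powr (R-1)) * (\<Sum>k. emeasure P (F n k)) \<le> ennreal (real n powr (R-1)) * ennreal (K * real n powr (-(R+1)) * Z)"
      by (intro mult_left_mono Fs n) auto
    also have "\<dots> = ennreal (real n powr (R-1) * (K * real n powr (-(R+1)) * Z))"
      using K0 Z0 by (simp add: ennreal_mult)
    also have "real n powr (R-1) * (K * real n powr (-(R+1)) * Z) = K * Z * (real n powr (R-1) * real n powr (-(R+1)))"
      by (simp add: ac_simps)
    also have "real n powr (R-1) * real n powr (-(R+1)) = real n powr (-2)"
      by (simp add: powr_add[symmetric])
    finally show ?thesis .
  qed
  have "(\<Sum>n. ennreal (real n powr (R-1)) * (\<Sum>k. emeasure P (F n k))) \<le> (\<Sum>n. ennreal (K * Z * real n powr (-2)))"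
    by (intro suminf_le tm) auto
  also have "\<dots> = ennreal (\<Sum>n. K * Z * real n powr (-2))"
    using K0 Z0 by (intro suminf_ennreal2 summable_mult sumZ) auto
  also have "\<dots> < \<infinity>" by simp
  finally show ?thesis unfolding F_def \<delta>_def \<mu>'_def .
qed



lemma powr_step:
  fixes K :: nat and R :: real
  assumes R: "1 \<le> R"
  shows "real (Suc K) powr R \<le> real K powr R + R * real (Suc K) powr (R - 1)"
proof (cases "K = 0")
  case True
  then show ?thesis using R by simp
next
  case False
  then have K: "1 \<le> real K" by simp
  obtain z where z: "real K < z" "z < real K + 1"
    "(real K + 1) powr R - real K powr R = (real K + 1 - real K) * (R * z powr (R - 1))"
  proof -
    have der: "\<And>x. real K \<le> x \<Longrightarrow> x \<le> real K + 1 \<Longrightarrow> ((\<lambda>x. x powr R) has_real_derivative R * x powr (R - 1)) (at x)"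
      using K by (intro has_real_derivative_powr) auto
    from MVT2[of "real K" "real K + 1", OF _ der] that show ?thesis by auto
  qed
  have "z powr (R - 1) \<le> (real K + 1) powr (R - 1)"
    using z K R by (intro powr_mono2) auto
  then have "R * z powr (R - 1) \<le> R * (real K + 1) powr (R - 1)" using R by simp
  then show ?thesis using z by (simp add: add.commute)
qed

lemma powr_sum_bound:
  fixes K :: nat and R :: real
  assumes R: "1 \<le> R"
  shows "real K powr R \<le> R * (\<Sum>n\<in>{1..K}. real n powr (R - 1))"
proof (induction K)
  case 0
  then show ?case by simp
next
  case (Suc K)
  have "real (Suc K) powr R \<le> real K powr R + R * real (Suc K) powr (R - 1)" using powr_step[OF R] .
  also have "\<dots> \<le> R * (\<Sum>n\<in>{1..K}. real n powr (R - 1)) + R * real (Suc K) powr (R - 1)"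
    using Suc by simp
  also have "\<dots> = R * (\<Sum>n\<in>{1..Suc K}. real n powr (R - 1))"
    by (simp add: distrib_left)
  finally show ?case .
qed

lemma ennreal_suminf_diverge:
  fixes f :: "nat \<Rightarrow> ennreal"
  assumes f: "\<And>n. 1 \<le> n \<Longrightarrow> 1 \<le> f n"
  shows "(\<Sum>n. f n) = \<infinity>"
proof (rule ccontr)
  assume "(\<Sum>n. f n) \<noteq> \<infinity>"
  then obtain x where x: "(\<Sum>n. f n) = ennreal x" "0 \<le> x"
    using less_top_ennreal by (metis infinity_ennreal_def top.not_eq_extremum)
  obtain N :: nat where N: "x < real N" using reals_Archimedean2 by blast
  have "of_nat N = (\<Sum>n\<in>{1..N}. (1::ennreal))" by simp
  also have "\<dots> \<le> (\<Sum>n\<in>{1..N}. f n)" using f by (intro sum_mono) auto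
  also have "\<dots> \<le> (\<Sum>n. f n)" by (intro sum_le_suminf) auto
  finally have "ennreal (real N) \<le> ennreal x" using x by (simp add: ennreal_of_nat_eq_real_of_nat)
  then show False using N x(2) by (simp add: ennreal_le_iff)
qed

lemma enat_powr_bound:
  fixes L :: enat and r R :: real
  assumes r: "0 < r" "r \<le> R" and R: "1 \<le> R"
  shows "enat_powr L r \<le> 1 + ennreal R * (\<Sum>n. ennreal (real n powr (R - 1)) * of_bool (1 \<le> n \<and> enat n \<le> L))"
proof (cases L)
  case (enat K)
  have "(\<Sum>n. ennreal (real n powr (R - 1)) * of_bool (1 \<le> n \<and> enat n \<le> L))
      = (\<Sum>n\<in>{1..K}. ennreal (real n powr (R - 1)) * of_bool (1 \<le> n \<and> enat n \<le> L))"
    by (rule suminf_finite) (auto simp: enat)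
  also have "\<dots> = ennreal (\<Sum>n\<in>{1..K}. real n powr (R - 1))"
    by (subst sum_ennreal[symmetric]) (auto simp: enat intro!: sum.cong)
  finally have s: "(\<Sum>n. ennreal (real n powr (R - 1)) * of_bool (1 \<le> n \<and> enat n \<le> L)) = ennreal (\<Sum>n\<in>{1..K}. real n powr (R - 1))" .
  have "real K powr r \<le> 1 + real K powr R"
  proof (cases "K = 0")
    case False
    then have "real K powr r \<le> real K powr R" using r by (intro powr_mono) auto
    then show ?thesis by simp
  qed simp
  also have "\<dots> \<le> 1 + R * (\<Sum>n\<in>{1..K}. real n powr (R - 1))"
    using powr_sum_bound[OF R] by simp
  finally have "ennreal (real K powr r) \<le> ennreal (1 + R * (\<Sum>n\<in>{1..K}. real n powr (R - 1)))"
    by (rule ennreal_leI)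
  also have "\<dots> = 1 + ennreal R * ennreal (\<Sum>n\<in>{1..K}. real n powr (R - 1))"
  proof -
    have S: "0 \<le> (\<Sum>n\<in>{1..K}. real n powr (R - 1))" by (rule sum_nonneg) simp
    have "ennreal (1 + R * (\<Sum>n\<in>{1..K}. real n powr (R - 1))) = ennreal 1 + ennreal (R * (\<Sum>n\<in>{1..K}. real n powr (R - 1)))"
      by (rule ennreal_plus) (use S R in auto)
    also have "ennreal (R * (\<Sum>n\<in>{1..K}. real n powr (R - 1))) = ennreal R * ennreal (\<Sum>n\<in>{1..K}. real n powr (R - 1))"
      by (rule ennreal_mult) (use S R in auto)
    finally show ?thesis by simp
  qed
  finally show ?thesis unfolding enat_powr_def using enat s by simp
next
  case infinity
  have "(\<Sum>n. ennreal (real n powr (R - 1)) * of_bool (1 \<le> n \<and> enat n \<le> L)) = \<infinity>"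
  proof (rule ennreal_suminf_diverge)
    fix n :: nat assume n: "1 \<le> n"
    have "1 \<le> real n powr (R - 1)" using n R by (intro ge_one_powr_ge_zero) auto
    then show "1 \<le> ennreal (real n powr (R - 1)) * of_bool (1 \<le> n \<and> enat n \<le> L)"
      using n infinity by (simp add: ennreal_leI)
  qed
  then show ?thesis using R by (simp add: ennreal_mult_top)
qed



lemma GL:
  fixes g :: "'a \<Rightarrow> real" and X :: "nat \<Rightarrow> 'w \<Rightarrow> 'a"
  assumes P: "prob_space P" and Q: "prob_space Q"
    and Xm: "\<And>i. i \<ge> 1 \<Longrightarrow> X i \<in> measurable P Q"
    and ind: "prob_space.indep_vars P (\<lambda>_. Q) X {1..}"
    and law: "\<And>i. i \<ge> 1 \<Longrightarrow> distr P Q (X i) = Q"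
    and gm[measurable]: "g \<in> borel_measurable Q" and gi: "integrable Q g" and g2: "integrable Q (\<lambda>x. (g x)^2)"
    and mom: "(\<integral>\<^sup>+x. ennreal (\<bar>g x\<bar> powr s) \<partial>Q) < \<infinity>"
    and \<mu>: "0 < (\<integral>x. g x \<partial>Q)" and R: "1 \<le> R" "R + 1 \<le> s"
  defines "\<delta> \<equiv> (\<integral>x. g x \<partial>Q) / (2 * (R + 3))"
  defines "EP n j \<equiv> {\<omega>\<in>space P. g (X (Suc j) \<omega>) < -(\<delta> * real (max (Suc j) n))}"
  defines "FP n k \<equiv> {\<omega>\<in>space P. n \<le> k \<and> (\<Sum>i=1..k. max (g (X i \<omega>)) (-(\<delta> * real (max i n)))) \<le> 0}"
  shows "(\<integral>\<^sup>+\<omega>. (\<Sum>n. ennreal (real n powr (R-1)) * ((\<Sum>j. indicator (EP n j) \<omega>) + (\<Sum>k. indicator (FP n k) \<omega>))) \<partial>P) < \<infinity>"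
    and "(\<lambda>\<omega>. (\<Sum>n. ennreal (real n powr (R-1)) * ((\<Sum>j. indicator (EP n j) \<omega>) + (\<Sum>k. indicator (FP n k) \<omega>)))) \<in> borel_measurable P"
proof -
  interpret P: prob_space P by fact
  have \<delta>0: "0 < \<delta>" unfolding \<delta>_def using \<mu> R by simp
  have XSm[measurable]: "X (Suc j) \<in> measurable P Q" for j using Xm by simp
  have EPm[measurable]: "EP n j \<in> sets P" for n j unfolding EP_def by measurable
  have sm[measurable]: "(\<lambda>\<omega>. \<Sum>i=1..k. max (g (X i \<omega>)) (-(\<delta> * real (max i n)))) \<in> borel_measurable P" for n k
    by (intro borel_measurable_sum borel_measurable_max borel_measurable_const measurable_compose[OF Xm gm]) auto
  have FPm[measurable]: "FP n k \<in> sets P" for n k unfolding FP_def by measurable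
  define w where "w n = ennreal (real n powr (R-1))" for n :: nat
  have "(\<integral>\<^sup>+\<omega>. (\<Sum>n. w n * ((\<Sum>j. indicator (EP n j) \<omega>) + (\<Sum>k. indicator (FP n k) \<omega>))) \<partial>P)
      = (\<Sum>n. \<integral>\<^sup>+\<omega>. w n * ((\<Sum>j. indicator (EP n j) \<omega>) + (\<Sum>k. indicator (FP n k) \<omega>)) \<partial>P)"
    by (rule nn_integral_suminf) measurable
  also have "\<dots> = (\<Sum>n. w n * ((\<Sum>j. emeasure P (EP n j)) + (\<Sum>k. emeasure P (FP n k))))"
  proof (intro suminf_cong)
    fix n
    have "(\<integral>\<^sup>+\<omega>. w n * ((\<Sum>j. indicator (EP n j) \<omega>) + (\<Sum>k. indicator (FP n k) \<omega>)) \<partial>P)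
        = w n * ((\<integral>\<^sup>+\<omega>. (\<Sum>j. indicator (EP n j) \<omega>) \<partial>P) + (\<integral>\<^sup>+\<omega>. (\<Sum>k. indicator (FP n k) \<omega>) \<partial>P))"
      by (simp add: nn_integral_cmult nn_integral_add)
    also have "\<dots> = w n * ((\<Sum>j. emeasure P (EP n j)) + (\<Sum>k. emeasure P (FP n k)))"
      by (simp add: nn_integral_suminf)
    finally show "(\<integral>\<^sup>+\<omega>. w n * ((\<Sum>j. indicator (EP n j) \<omega>) + (\<Sum>k. indicator (FP n k) \<omega>)) \<partial>P) = \<dots>" .
  qed
  also have "\<dots> = (\<Sum>n. w n * (\<Sum>j. emeasure P (EP n j))) + (\<Sum>n. w n * (\<Sum>k. emeasure P (FP n k)))"
    unfolding distrib_left by (rule suminf_add[symmetric]) auto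
  also have "(\<Sum>n. w n * (\<Sum>j. emeasure P (EP n j))) = (\<Sum>n. w n * (\<Sum>j. emeasure Q {x\<in>space Q. g x < -(\<delta> * real (max (Suc j) n))}))"
  proof -
    have "emeasure P (EP n j) = emeasure Q {x\<in>space Q. g x < -(\<delta> * real (max (Suc j) n))}" for n j
    proof -
      have "emeasure Q {x\<in>space Q. g x < -(\<delta> * real (max (Suc j) n))}
          = emeasure (distr P Q (X (Suc j))) {x\<in>space Q. g x < -(\<delta> * real (max (Suc j) n))}"
        using law[of "Suc j"] by simp
      also have "\<dots> = emeasure P (X (Suc j) -` {x\<in>space Q. g x < -(\<delta> * real (max (Suc j) n))} \<inter> space P)"
        by (rule emeasure_distr) measurable
      also have "X (Suc j) -` {x\<in>space Q. g x < -(\<delta> * real (max (Suc j) n))} \<inter> space P = EP n j"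
        unfolding EP_def using measurable_space[OF XSm] by auto
      finally show ?thesis by simp
    qed
    then show ?thesis by simp
  qed
  also have "\<dots> < \<infinity>"
    unfolding w_def by (rule E_part[OF Q gm mom \<delta>0 R])
  moreover have "(\<Sum>n. w n * (\<Sum>k. emeasure P (FP n k))) < \<infinity>"
    unfolding w_def FP_def \<delta>_def by (rule F_part[OF P Q Xm ind law gm gi g2 \<mu> R(1)])
  ultimately show "(\<integral>\<^sup>+\<omega>. (\<Sum>n. ennreal (real n powr (R-1)) * ((\<Sum>j. indicator (EP n j) \<omega>) + (\<Sum>k. indicator (FP n k) \<omega>))) \<partial>P) < \<infinity>"
    unfolding w_def by (simp add: less_top[symmetric])
  show "(\<lambda>\<omega>. (\<Sum>n. ennreal (real n powr (R-1)) * ((\<Sum>j. indicator (EP n j) \<omega>) + (\<Sum>k. indicator (FP n k) \<omega>)))) \<in> borel_measurable P"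
    by measurable
qed

lemma trunc_cover:
  fixes g :: "'a \<Rightarrow> real" and X :: "nat \<Rightarrow> 'w \<Rightarrow> 'a"
  assumes \<omega>: "\<omega> \<in> space P" and nk: "n \<le> k" and S: "(\<Sum>i=1..k. g (X i \<omega>)) \<le> 0"
  shows "1 \<le> (\<Sum>j. indicator {\<omega>\<in>space P. g (X (Suc j) \<omega>) < -(\<delta> * real (max (Suc j) n))} \<omega>)
          + (\<Sum>k. indicator {\<omega>\<in>space P. n \<le> k \<and> (\<Sum>i=1..k. max (g (X i \<omega>)) (-(\<delta> * real (max i n)))) \<le> 0} \<omega> :: ennreal)"
proof (cases "\<exists>i\<in>{1..k}. g (X i \<omega>) < -(\<delta> * real (max i n))")
  case True
  then obtain i where i: "i \<in> {1..k}" "g (X i \<omega>) < -(\<delta> * real (max i n))" by auto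
  define j where "j = i - 1"
  have ij: "i = Suc j" unfolding j_def using i by simp
  have "(1::ennreal) = (\<Sum>j'\<in>{j}. indicator {\<omega>\<in>space P. g (X (Suc j') \<omega>) < -(\<delta> * real (max (Suc j') n))} \<omega>)"
    using i \<omega> ij by simp
  also have "\<dots> \<le> (\<Sum>j. indicator {\<omega>\<in>space P. g (X (Suc j) \<omega>) < -(\<delta> * real (max (Suc j) n))} \<omega>)"
    by (intro sum_le_suminf) auto
  finally show ?thesis by (simp add: add_increasing2)
next
  case False
  then have "(\<Sum>i=1..k. max (g (X i \<omega>)) (-(\<delta> * real (max i n)))) = (\<Sum>i=1..k. g (X i \<omega>))"
    by (intro sum.cong) (auto simp: not_less)
  then have "(1::ennreal) = (\<Sum>k'\<in>{k}. indicator {\<omega>\<in>space P. n \<le> k' \<and> (\<Sum>i=1..k'. max (g (X i \<omega>)) (-(\<delta> * real (max i n)))) \<le> 0} \<omega>)"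
    using S nk \<omega> by simp
  also have "\<dots> \<le> (\<Sum>k. indicator {\<omega>\<in>space P. n \<le> k \<and> (\<Sum>i=1..k. max (g (X i \<omega>)) (-(\<delta> * real (max i n)))) \<le> 0} \<omega>)"
    by (intro sum_le_suminf) auto
  finally show ?thesis by (simp add: add_increasing)
qed



lemma convex_diff_bound:
  fixes f :: "real \<Rightarrow> real"
  assumes f: "convex_on UNIV f"
  shows "\<bar>f t - f t0\<bar> \<le> \<bar>t - t0\<bar> * (\<bar>right_deriv f t\<bar> + \<bar>right_deriv f t0\<bar>)"
proof (cases t t0 rule: linorder_cases)
  case less
  have 1: "right_deriv f t \<le> (f t0 - f t) / (t0 - t)" using right_deriv_convex(2)[OF f less] .
  have 2: "(f t0 - f t) / (t0 - t) \<le> right_deriv f t0" using right_deriv_convex(3)[OF f less] .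
  have "\<bar>(f t0 - f t) / (t0 - t)\<bar> \<le> \<bar>right_deriv f t\<bar> + \<bar>right_deriv f t0\<bar>" using 1 2 by linarith
  then have "\<bar>f t0 - f t\<bar> / (t0 - t) \<le> \<bar>right_deriv f t\<bar> + \<bar>right_deriv f t0\<bar>" using less by simp
  then have "\<bar>f t0 - f t\<bar> \<le> (t0 - t) * (\<bar>right_deriv f t\<bar> + \<bar>right_deriv f t0\<bar>)"
    using less by (simp add: divide_le_eq mult.commute)
  then show ?thesis using less by (simp add: abs_minus_commute)
next
  case equal then show ?thesis by simp
next
  case greater
  have 1: "right_deriv f t0 \<le> (f t - f t0) / (t - t0)" using right_deriv_convex(2)[OF f greater] .
  have 2: "(f t - f t0) / (t - t0) \<le> right_deriv f t" using right_deriv_convex(3)[OF f greater] .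
  have "\<bar>(f t - f t0) / (t - t0)\<bar> \<le> \<bar>right_deriv f t\<bar> + \<bar>right_deriv f t0\<bar>" using 1 2 by linarith
  then have "\<bar>f t - f t0\<bar> / (t - t0) \<le> \<bar>right_deriv f t\<bar> + \<bar>right_deriv f t0\<bar>" using greater by simp
  then have "\<bar>f t - f t0\<bar> \<le> (t - t0) * (\<bar>right_deriv f t\<bar> + \<bar>right_deriv f t0\<bar>)"
    using greater by (simp add: divide_le_eq mult.commute)
  then show ?thesis using greater by simp
qed

lemma hdiff_integrable:
  fixes h :: "'a \<Rightarrow> real \<Rightarrow> real"
  assumes Q: "prob_space Q"
    and h_meas: "\<And>t. (\<lambda>x. h x t) \<in> borel_measurable Q"
    and h_convex: "\<And>x. x \<in> space Q \<Longrightarrow> convex_on UNIV (h x)"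
    and int_right: "\<And>t. integrable Q (\<lambda>x. right_deriv (h x) t)"
  shows "integrable Q (\<lambda>x. h x t - h x t0)"
proof (rule Bochner_Integration.integrable_bound)
  show "integrable Q (\<lambda>x. \<bar>t - t0\<bar> * (\<bar>right_deriv (h x) t\<bar> + \<bar>right_deriv (h x) t0\<bar>))"
    using int_right by auto
  show "(\<lambda>x. h x t - h x t0) \<in> borel_measurable Q" using h_meas by measurable
  show "AE x in Q. norm (h x t - h x t0) \<le> norm (\<bar>t - t0\<bar> * (\<bar>right_deriv (h x) t\<bar> + \<bar>right_deriv (h x) t0\<bar>))"
    using convex_diff_bound[OF h_convex] by (intro AE_I2) (simp add: abs_mult)
qed

lemma moment_square:
  fixes g :: "'a \<Rightarrow> real"
  assumes Q: "prob_space Q" and gm: "g \<in> borel_measurable Q"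
    and mom: "(\<integral>\<^sup>+x. ennreal (\<bar>g x\<bar> powr s) \<partial>Q) < \<infinity>" and s: "2 \<le> s"
  shows "integrable Q (\<lambda>x. (g x)^2)"
proof -
  interpret Q: prob_space Q by fact
  have b: "norm ((g x)^2) \<le> 1 + \<bar>g x\<bar> powr s" for x
  proof (cases "\<bar>g x\<bar> \<le> 1")
    case True
    then have "(g x)^2 \<le> 1" by (simp add: abs_square_le_1)
    then show ?thesis by (simp add: add_increasing2)
  next
    case False
    then have "(g x)^2 = \<bar>g x\<bar> powr 2" by (simp add: powr_numeral)
    also have "\<dots> \<le> \<bar>g x\<bar> powr s" using False s by (intro powr_mono) auto
    finally show ?thesis by simp
  qed
  show ?thesis
  proof (rule integrableI_bounded)
    show "(\<lambda>x. (g x)^2) \<in> borel_measurable Q" using gm by measurable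
    have "(\<integral>\<^sup>+x. ennreal (norm ((g x)^2)) \<partial>Q) \<le> (\<integral>\<^sup>+x. 1 + ennreal (\<bar>g x\<bar> powr s) \<partial>Q)"
    proof (intro nn_integral_mono)
      fix x
      have "ennreal (norm ((g x)^2)) \<le> ennreal (1 + \<bar>g x\<bar> powr s)" using b by (rule ennreal_leI)
      then show "ennreal (norm ((g x)^2)) \<le> 1 + ennreal (\<bar>g x\<bar> powr s)" by simp
    qed
    also have "\<dots> = 1 + (\<integral>\<^sup>+x. ennreal (\<bar>g x\<bar> powr s) \<partial>Q)"
      using gm by (subst nn_integral_add) (auto simp: Q.emeasure_space_1)
    also have "\<dots> < \<infinity>" using mom by simp
    finally show "(\<integral>\<^sup>+x. ennreal (norm ((g x)^2)) \<partial>Q) < \<infinity>" .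
  qed
qed

lemma enat_le_Sup_image:
  fixes S :: "nat set"
  assumes "enat n \<le> Sup (enat ` S)" "1 \<le> n"
  shows "\<exists>k\<in>S. n \<le> k"
proof (rule ccontr)
  assume "\<not> ?thesis"
  then have "\<forall>k\<in>S. k \<le> n - 1" by auto
  then have "Sup (enat ` S) \<le> enat (n - 1)" by (intro Sup_least) auto
  then have "enat n \<le> enat (n - 1)" using assms(1) by (meson order_trans)
  then show False using assms(2) by simp
qed


theorem corollary6:
  fixes Q :: "'a measure" and P :: "'w measure"
    and h :: "'a \<Rightarrow> real \<Rightarrow> real" and t0 m s :: real
    and X :: "nat \<Rightarrow> 'w \<Rightarrow> 'a" and mhat :: "nat \<Rightarrow> 'w \<Rightarrow> real"
  assumes Q_prob: "prob_space Q"
    and h_meas: "\<And>t. (\<lambda>x. h x t) \<in> borel_measurable Q"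
    and h_convex: "\<And>x. x \<in> space Q \<Longrightarrow> convex_on UNIV (h x)"
    and int_right: "\<And>t. integrable Q (\<lambda>x. right_deriv (h x) t)"
    and int_left: "\<And>t. integrable Q (\<lambda>x. left_deriv (h x) t)"
    and P_prob: "prob_space P"
    and X_meas: "\<And>i. i \<ge> 1 \<Longrightarrow> X i \<in> measurable P Q"
    and X_indep: "prob_space.indep_vars P (\<lambda>_. Q) X {1..}"
    and X_law: "\<And>i. i \<ge> 1 \<Longrightarrow> distr P Q (X i) = Q"
    and m_min: "\<forall>t. (\<integral>x. (h x m - h x t0) \<partial>Q) \<le> (\<integral>x. (h x t - h x t0) \<partial>Q)"
    and m_unique: "\<forall>t. (\<forall>u. (\<integral>x. (h x t - h x t0) \<partial>Q) \<le> (\<integral>x. (h x u - h x t0) \<partial>Q)) \<longrightarrow> t = m"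
    and mhat_meas: "\<And>n. n \<ge> 1 \<Longrightarrow> mhat n \<in> borel_measurable P"
    and mhat_min: "\<And>n \<omega> t. n \<ge> 1 \<Longrightarrow> \<omega> \<in> space P \<Longrightarrow>
        emp_crit h t0 X n \<omega> (mhat n \<omega>) \<le> emp_crit h t0 X n \<omega> t"
    and mhat_smallest: "\<And>n \<omega> t. n \<ge> 1 \<Longrightarrow> \<omega> \<in> space P \<Longrightarrow>
        (\<forall>u. emp_crit h t0 X n \<omega> t \<le> emp_crit h t0 X n \<omega> u) \<Longrightarrow> mhat n \<omega> \<le> t"
    and s_gt: "s > 2"
    and moment: "\<exists>x0>0. \<forall>x\<in>{-x0..x0}.
        (\<integral>\<^sup>+\<omega>. ennreal (\<bar>right_deriv (h (X 1 \<omega>)) (m + x)\<bar> powr s) \<partial>P) < \<infinity>"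
  shows "\<forall>r \<in> {0<..<s/2}. \<forall>\<epsilon>>0.
           (\<integral>\<^sup>+\<omega>. enat_powr (last_exit mhat m \<epsilon> \<omega>) r \<partial>P) < \<infinity>"
proof (intro ballI allI impI)
  fix r \<epsilon> :: real
  assume r: "r \<in> {0<..<s/2}" and \<epsilon>: "0 < \<epsilon>"
  interpret Q: prob_space Q by (rule Q_prob)
  interpret P: prob_space P by (rule P_prob)
  obtain x0 where x0: "0 < x0" "\<forall>x\<in>{-x0..x0}. (\<integral>\<^sup>+\<omega>. ennreal (\<bar>right_deriv (h (X 1 \<omega>)) (m + x)\<bar> powr s) \<partial>P) < \<infinity>"
    using moment by blast
  define e where "e = min \<epsilon> x0"
  have e: "0 < e" "e \<le> \<epsilon>" "e \<le> x0" unfolding e_def using \<epsilon> x0 by auto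
  define a where "a = m + e"
  define b where "b = m - e"
  define ga where "ga x = right_deriv (h x) a" for x
  define gb where "gb x = - right_deriv (h x) b" for x
  define R where "R = max r 1"
  have R: "1 \<le> R" "r \<le> R" "R + 1 \<le> s" using r s_gt unfolding R_def by auto
  have r0: "0 < r" using r by simp
  have gam[measurable]: "ga \<in> borel_measurable Q" unfolding ga_def[abs_def] using int_right by auto
  have gbm[measurable]: "gb \<in> borel_measurable Q" unfolding gb_def[abs_def] using int_right by auto
  have gai: "integrable Q ga" unfolding ga_def[abs_def] using int_right by auto
  have gbi: "integrable Q gb" unfolding gb_def[abs_def] using int_right by auto
  have X1: "X 1 \<in> measurable P Q" using X_meas by simp
  have momQ: "(\<integral>\<^sup>+x. ennreal (\<bar>right_deriv (h x) (m + y)\<bar> powr s) \<partial>Q) < \<infinity>" if y: "y \<in> {-x0..x0}" for y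
  proof -
    have rm: "(\<lambda>x. right_deriv (h x) (m + y)) \<in> borel_measurable Q" using int_right by auto
    have "(\<integral>\<^sup>+x. ennreal (\<bar>right_deriv (h x) (m + y)\<bar> powr s) \<partial>Q)
        = (\<integral>\<^sup>+x. ennreal (\<bar>right_deriv (h x) (m + y)\<bar> powr s) \<partial>distr P Q (X 1))"
      using X_law[of 1] by simp
    also have "\<dots> = (\<integral>\<^sup>+\<omega>. ennreal (\<bar>right_deriv (h (X 1 \<omega>)) (m + y)\<bar> powr s) \<partial>P)"
      using rm X1 by (intro nn_integral_distr) auto
    finally show ?thesis using x0(2) y by simp
  qed
  have momA: "(\<integral>\<^sup>+x. ennreal (\<bar>ga x\<bar> powr s) \<partial>Q) < \<infinity>"
    using momQ[of e] e unfolding ga_def a_def by simp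
  have momB: "(\<integral>\<^sup>+x. ennreal (\<bar>gb x\<bar> powr s) \<partial>Q) < \<infinity>"
    using momQ[of "-e"] e unfolding gb_def b_def by simp
  have ga2: "integrable Q (\<lambda>x. (ga x)^2)" using moment_square[OF Q_prob gam momA] s_gt by simp
  have gb2: "integrable Q (\<lambda>x. (gb x)^2)" using moment_square[OF Q_prob gbm momB] s_gt by simp
  define Mf where "Mf t = (\<integral>x. (h x t - h x t0) \<partial>Q)" for t
  have hi: "integrable Q (\<lambda>x. h x t - h x t0)" for t
    by (rule hdiff_integrable[OF Q_prob h_meas h_convex int_right])
  have hdi: "integrable Q (\<lambda>x. (h x u - h x v) / e)" for u v
  proof -
    have "integrable Q (\<lambda>x. ((h x u - h x t0) - (h x v - h x t0)) / e)"
      by (intro integrable_divide_zero Bochner_Integration.integrable_diff hi)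
    then show ?thesis by simp
  qed
  have Mdiff: "(\<integral>x. (h x u - h x v) / e \<partial>Q) = (Mf u - Mf v) / e" for u v
  proof -
    have "(\<integral>x. (h x u - h x v) / e \<partial>Q) = (\<integral>x. ((h x u - h x t0) - (h x v - h x t0)) / e \<partial>Q)" by simp
    also have "\<dots> = (\<integral>x. ((h x u - h x t0) - (h x v - h x t0)) \<partial>Q) / e" by simp
    also have "(\<integral>x. ((h x u - h x t0) - (h x v - h x t0)) \<partial>Q) = Mf u - Mf v"
      unfolding Mf_def using hi by (rule Bochner_Integration.integral_diff) (rule hi)
    finally show ?thesis .
  qed
  have muA: "0 < (\<integral>x. ga x \<partial>Q)"
  proof (rule ccontr)
    assume "\<not> ?thesis"
    then have le0: "(\<integral>x. ga x \<partial>Q) \<le> 0" by simp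
    have "(\<integral>x. (h x a - h x m) / e \<partial>Q) \<le> (\<integral>x. ga x \<partial>Q)"
    proof (rule integral_mono)
      show "integrable Q (\<lambda>x. (h x a - h x m) / e)" by (rule hdi)
      show "integrable Q ga" by (rule gai)
      fix x assume x: "x \<in> space Q"
      have "m < a" using e unfolding a_def by simp
      from right_deriv_convex(3)[OF h_convex[OF x] this]
      show "(h x a - h x m) / e \<le> ga x" unfolding ga_def a_def by simp
    qed
    then have "(Mf a - Mf m) / e \<le> 0" using le0 Mdiff[of a m] by linarith
    then have "Mf a \<le> Mf m" using e by (simp add: divide_le_0_iff)
    then have "\<forall>u. Mf a \<le> Mf u" using m_min unfolding Mf_def by (meson order_trans)
    then have "a = m" using m_unique unfolding Mf_def by blast
    then show False using e unfolding a_def by simp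
  qed
  have muB: "0 < (\<integral>x. gb x \<partial>Q)"
  proof (rule ccontr)
    assume "\<not> ?thesis"
    then have ge0: "0 \<le> (\<integral>x. right_deriv (h x) b \<partial>Q)" unfolding gb_def by simp
    have "(\<integral>x. right_deriv (h x) b \<partial>Q) \<le> (\<integral>x. (h x m - h x b) / e \<partial>Q)"
    proof (rule integral_mono)
      show "integrable Q (\<lambda>x. (h x m - h x b) / e)" by (rule hdi)
      show "integrable Q (\<lambda>x. right_deriv (h x) b)" by (rule int_right)
      fix x assume x: "x \<in> space Q"
      have "b < m" using e unfolding b_def by simp
      from right_deriv_convex(2)[OF h_convex[OF x] this]
      show "right_deriv (h x) b \<le> (h x m - h x b) / e" unfolding b_def by simp
    qed
    then have "0 \<le> (Mf m - Mf b) / e" using ge0 Mdiff[of m b] by linarith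
    then have "Mf b \<le> Mf m" using e by (simp add: zero_le_divide_iff)
    then have "\<forall>u. Mf b \<le> Mf u" using m_min unfolding Mf_def by (meson order_trans)
    then have "b = m" using m_unique unfolding Mf_def by blast
    then show False using e unfolding b_def by simp
  qed
  define \<delta>a where "\<delta>a = (\<integral>x. ga x \<partial>Q) / (2 * (R + 3))"
  define \<delta>b where "\<delta>b = (\<integral>x. gb x \<partial>Q) / (2 * (R + 3))"
  define w where "w n = ennreal (real n powr (R - 1))" for n :: nat
  define A where "A n \<omega> = (\<Sum>j. indicator {\<omega>\<in>space P. ga (X (Suc j) \<omega>) < -(\<delta>a * real (max (Suc j) n))} \<omega>)
      + (\<Sum>k. indicator {\<omega>\<in>space P. n \<le> k \<and> (\<Sum>i=1..k. max (ga (X i \<omega>)) (-(\<delta>a * real (max i n)))) \<le> 0} \<omega> :: ennreal)" for n \<omega>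
  define B where "B n \<omega> = (\<Sum>j. indicator {\<omega>\<in>space P. gb (X (Suc j) \<omega>) < -(\<delta>b * real (max (Suc j) n))} \<omega>)
      + (\<Sum>k. indicator {\<omega>\<in>space P. n \<le> k \<and> (\<Sum>i=1..k. max (gb (X i \<omega>)) (-(\<delta>b * real (max i n)))) \<le> 0} \<omega> :: ennreal)" for n \<omega>
  define SA where "SA \<omega> = (\<Sum>n. w n * A n \<omega>)" for \<omega>
  define SB where "SB \<omega> = (\<Sum>n. w n * B n \<omega>)" for \<omega>
  note GA = GL[OF P_prob Q_prob X_meas X_indep X_law gam gai ga2 momA muA R(1) R(3)]
  note GB = GL[OF P_prob Q_prob X_meas X_indep X_law gbm gbi gb2 momB muB R(1) R(3)]
  have SAi: "(\<integral>\<^sup>+\<omega>. SA \<omega> \<partial>P) < \<infinity>"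
    unfolding SA_def A_def w_def \<delta>a_def by (rule GA(1))
  have SAm: "SA \<in> borel_measurable P"
    unfolding SA_def A_def w_def \<delta>a_def by (rule GA(2))
  have SBi: "(\<integral>\<^sup>+\<omega>. SB \<omega> \<partial>P) < \<infinity>"
    unfolding SB_def B_def w_def \<delta>b_def by (rule GB(1))
  have SBm: "SB \<in> borel_measurable P"
    unfolding SB_def B_def w_def \<delta>b_def by (rule GB(2))
  have cover: "of_bool (1 \<le> n \<and> enat n \<le> last_exit mhat m \<epsilon> \<omega>) \<le> A n \<omega> + B n \<omega>"
    if \<omega>: "\<omega> \<in> space P" for n \<omega>
  proof (cases "1 \<le> n \<and> enat n \<le> last_exit mhat m \<epsilon> \<omega>")
    case False then show ?thesis by (simp only: False of_bool_eq(1) zero_le)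
  next
    case True
    then obtain k where k: "1 \<le> k" "\<epsilon> < \<bar>mhat k \<omega> - m\<bar>" "n \<le> k"
      using enat_le_Sup_image[of n "{k. 1 \<le> k \<and> \<epsilon> < \<bar>mhat k \<omega> - m\<bar>}"] unfolding last_exit_def by auto
    have cvx: "convex_on UNIV (h (X i \<omega>))" if "i \<in> {1..k}" for i
      using that \<omega> by (intro h_convex measurable_space[OF X_meas]) auto
    have mn: "\<And>t. emp_crit h t0 X k \<omega> (mhat k \<omega>) \<le> emp_crit h t0 X k \<omega> t"
      using mhat_min k(1) \<omega> by blast
    have sm: "\<And>t. (\<forall>u. emp_crit h t0 X k \<omega> t \<le> emp_crit h t0 X k \<omega> u) \<Longrightarrow> mhat k \<omega> \<le> t"
      using mhat_smallest k(1) \<omega> by blast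
    show ?thesis
    proof (cases "m < mhat k \<omega>")
      case True
      then have "a < mhat k \<omega>" using k e unfolding a_def by auto
      from mhat_above[OF k(1) cvx mn sm this]
      have "(\<Sum>i=1..k. ga (X i \<omega>)) \<le> 0" unfolding ga_def by simp
      from trunc_cover[where g=ga and X=X and \<delta>=\<delta>a, OF \<omega> k(3) this]
      have "1 \<le> A n \<omega>" unfolding A_def .
      then show ?thesis using True by (simp add: add_increasing2 \<open>1 \<le> n \<and> enat n \<le> last_exit mhat m \<epsilon> \<omega>\<close>)
    next
      case False
      then have "mhat k \<omega> < b" using k e unfolding b_def by auto
      from mhat_below[OF k(1) cvx mn this]
      have "(\<Sum>i=1..k. gb (X i \<omega>)) \<le> 0" unfolding gb_def by (simp add: sum_negf)
      from trunc_cover[where g=gb and X=X and \<delta>=\<delta>b, OF \<omega> k(3) this]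
      have "1 \<le> B n \<omega>" unfolding B_def .
      then show ?thesis by (simp add: add_increasing \<open>1 \<le> n \<and> enat n \<le> last_exit mhat m \<epsilon> \<omega>\<close>)
    qed
  qed
  have pw: "enat_powr (last_exit mhat m \<epsilon> \<omega>) r \<le> 1 + ennreal R * (SA \<omega> + SB \<omega>)" if \<omega>: "\<omega> \<in> space P" for \<omega>
  proof -
    have "enat_powr (last_exit mhat m \<epsilon> \<omega>) r \<le> 1 + ennreal R * (\<Sum>n. w n * of_bool (1 \<le> n \<and> enat n \<le> last_exit mhat m \<epsilon> \<omega>))"
      unfolding w_def by (rule enat_powr_bound[OF r0 R(2) R(1)])
    also have "(\<Sum>n. w n * of_bool (1 \<le> n \<and> enat n \<le> last_exit mhat m \<epsilon> \<omega>)) \<le> (\<Sum>n. w n * A n \<omega> + w n * B n \<omega>)"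
    proof (intro suminf_le summableI)
      fix n
      have "w n * of_bool (1 \<le> n \<and> enat n \<le> last_exit mhat m \<epsilon> \<omega>) \<le> w n * (A n \<omega> + B n \<omega>)"
        by (rule mult_left_mono[OF cover[OF \<omega>]]) simp
      then show "w n * of_bool (1 \<le> n \<and> enat n \<le> last_exit mhat m \<epsilon> \<omega>) \<le> w n * A n \<omega> + w n * B n \<omega>"
        by (simp only: distrib_left)
    qed
    also have "\<dots> = SA \<omega> + SB \<omega>" unfolding SA_def SB_def by (rule suminf_add[symmetric]) auto
    finally show ?thesis by (simp add: add_left_mono mult_left_mono)
  qed
  have "(\<integral>\<^sup>+\<omega>. enat_powr (last_exit mhat m \<epsilon> \<omega>) r \<partial>P) \<le> (\<integral>\<^sup>+\<omega>. 1 + ennreal R * (SA \<omega> + SB \<omega>) \<partial>P)"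
    using pw by (intro nn_integral_mono) auto
  also have "\<dots> = 1 + ennreal R * ((\<integral>\<^sup>+\<omega>. SA \<omega> \<partial>P) + (\<integral>\<^sup>+\<omega>. SB \<omega> \<partial>P))"
    using SAm SBm by (simp add: nn_integral_add nn_integral_cmult P.emeasure_space_1)
  also have "\<dots> < \<infinity>" using SAi SBi by (simp add: ennreal_mult_less_top)
  finally show "(\<integral>\<^sup>+\<omega>. enat_powr (last_exit mhat m \<epsilon> \<omega>) r \<partial>P) < \<infinity>" .
qed

end
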